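(* Let $g,h$ be relatively prime divisors of $N$ and $\chi\in X_N$, $\psi=\theta\chi^{-1}$. Then the eigensymbol $\alpha^{g,h}_{\chi,\psi}$ is zero unless $f_\chi$ divides $N/g$ and $f_\psi$ divides $N/h$.
   Context: $p$ is an odd prime, $M$ a positive integer with $p\nmid M\varphi(M)$, $N=M$ or $Mp$, $N>1$, $\Delta=(\mathbb{Z}/N\mathbb{Z})^\times/\langle-1\rangle$. $H$ is a space of level $N$ modular symbols: a $\mathbb{Z}_p[\Delta]$-module spanned by symbols $[u:v]$ ($u,v\in\mathbb{Z}/N\mathbb{Z}$ generating the unit ideal) satisfying $[u:v]=[-u:-v]=-[-v:u]$, $[u:v]=[u:u+v]+[u+v:v]$, $\langle a\rangle[u:v]=[au:av]$. $\theta:\Delta\to\mathbb{C}_p^\times$ is a character, $\mathcal{O}=\mathbb{Z}_p[\mu_{\varphi(N)}]$, $X_N=\mathrm{Hom}((\mathbb{Z}/N\mathbb{Z})^\times,\mathcal{O}^\times)$, $e_\theta=\frac1{\varphi(N)}\sum_a\theta^{-1}(a)\langle a\rangle$, $H^\theta=e_\theta(H\otimes_{\mathbb{Z}_p}\mathcal{O})$. $\alpha^{g,h}_{\chi,\psi}=\frac{1}{\varphi(N)^2}\sum_{a,b\in(\mathbb{Z}/N\mathbb{Z})^\times}\chi^{-1}(a)\psi^{-1}(b)[ga:hb]$. $f_\chi$ denotes the conductor of $\chi$. *)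

theory Defs
  imports "HOL-Number_Theory.Number_Theory"
begin

text \<open>Residues mod N are represented by integers; (Z/NZ)^x by the set of representatives
  in {0..<N} coprime to N.\<close>

definition units_mod :: "nat \<Rightarrow> int set" where
  "units_mod N = {a \<in> {0..<int N}. coprime a (int N)}"

text \<open>Inverse of a residue class mod N (meaningful for units).\<close>
definition res_inv :: "nat \<Rightarrow> int \<Rightarrow> int" where
  "res_inv N a = (SOME b. [a * b = 1] (mod int N))"

text \<open>Multiplicative inverse in a ring (meaningful for units).\<close>
definition ring_inv :: "'o::comm_ring_1 \<Rightarrow> 'o" where
  "ring_inv x = (SOME y. y * x = 1)"

text \<open>A Dirichlet character mod N with values in O^x, i.e. an element of
  X_N = Hom((Z/NZ)^x, O^x), viewed as a function on integers (values on non-units irrelevant).\<close>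
definition is_char :: "nat \<Rightarrow> (int \<Rightarrow> 'o::comm_ring_1) \<Rightarrow> bool" where
  "is_char N \<chi> \<longleftrightarrow>
     (\<forall>a b. [a = b] (mod int N) \<longrightarrow> \<chi> a = \<chi> b) \<and>
     (\<forall>a b. coprime a (int N) \<longrightarrow> coprime b (int N) \<longrightarrow> \<chi> (a * b) = \<chi> a * \<chi> b) \<and>
     (\<forall>a. coprime a (int N) \<longrightarrow> \<chi> a dvd 1)"

definition char_inv :: "nat \<Rightarrow> (int \<Rightarrow> 'o::comm_ring_1) \<Rightarrow> int \<Rightarrow> 'o" where
  "char_inv N \<chi> a = \<chi> (res_inv N a)"

definition conductor :: "nat \<Rightarrow> (int \<Rightarrow> 'o::comm_ring_1) \<Rightarrow> nat" where
  "conductor N \<chi> = (LEAST f. 0 < f \<and> f dvd N \<and>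
      (\<forall>a. coprime a (int N) \<and> [a = 1] (mod int f) \<longrightarrow> \<chi> a = 1))"

definition eigensym ::
  "('o::comm_ring_1 \<Rightarrow> 'h::ab_group_add \<Rightarrow> 'h) \<Rightarrow> (int \<Rightarrow> int \<Rightarrow> 'h) \<Rightarrow> nat \<Rightarrow> nat \<Rightarrow> nat
     \<Rightarrow> (int \<Rightarrow> 'o) \<Rightarrow> (int \<Rightarrow> 'o) \<Rightarrow> 'h" where
  "eigensym scale msym N g h \<chi> \<psi> =
     scale (ring_inv (of_nat (totient N) ^ 2))
       (\<Sum>a\<in>units_mod N. \<Sum>b\<in>units_mod N.
          scale (char_inv N \<chi> a * char_inv N \<psi> b) (msym (int g * a) (int h * b)))"

text \<open>Pairs (u,v) in Z/NZ generating the unit ideal.\<close>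
definition unimod :: "nat \<Rightarrow> int \<Rightarrow> int \<Rightarrow> bool" where
  "unimod N u v \<longleftrightarrow> gcd (gcd u v) (int N) = 1"

end

theory Submission imports Defs begin
lemma lift: fixes x m N :: int assumes "coprime x m" "m dvd N" "N > 0"
  shows "\<exists>t. coprime (x + m * t) N"
proof -
  define Q where "Q = {q\<in>prime_factors N. \<not> q dvd x}"
  define t where "t = (\<Prod>q\<in>Q. q)"
  have fQ: "finite Q" unfolding Q_def by simp
  have "coprime (x + m * t) N"
  proof (rule ccontr)
    assume nc: "\<not> coprime (x + m * t) N"
    have "gcd (x + m * t) N \<noteq> 0" using assms by auto
    moreover have "\<not> is_unit (gcd (x + m * t) N)" using nc
      by (simp add: coprime_iff_gcd_eq_1)
    ultimately obtain q where q: "q dvd gcd (x + m * t) N" "prime q"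
      using prime_divisor_exists by blast
    have qN: "q dvd N" "q dvd x + m * t" using q by auto
    have qpos: "q \<ge> 0" using q(2) by (simp add: prime_ge_0_int)
    have qPF: "q \<in> prime_factors N" using qN q(2) assms(3)
      by (simp add: in_prime_factors_iff qpos)
    show False
    proof (cases "q dvd x")
      case True
      have "\<not> q dvd m" using True assms(1) q(2)
        by (meson coprime_common_divisor not_prime_unit)
      moreover have "\<not> q dvd t"
      proof
        assume "q dvd t"
        then obtain r where r: "r \<in> Q" "q dvd r" unfolding t_def
          using prime_dvd_prod_iff[OF fQ q(2)] by auto
        have "prime r" "r \<ge> 0" using r(1) unfolding Q_def by auto
        hence "q = r" using r(2) q(2) qpos
          using primes_dvd_imp_eq by (metis prime_nat_iff_prime nat_eq_iff2 int_dvd_int_iff)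
        thus False using r(1) True unfolding Q_def by auto
      qed
      ultimately have "\<not> q dvd m * t" using q(2) prime_dvd_mult_iff by blast
      thus False using qN(2) True by (simp add: dvd_add_right_iff)
    next
      case False
      have "q \<in> Q" using qPF False unfolding Q_def by auto
      hence "q dvd t" unfolding t_def using fQ by (metis dvd_triv_left prod.remove)
      hence "q dvd m * t" by simp
      thus False using qN(2) False by (simp add: dvd_add_left_iff)
    qed
  qed
  thus ?thesis by blast
qed

definition charish :: "nat \<Rightarrow> (int \<Rightarrow> 'o::comm_ring_1) \<Rightarrow> bool" where
  "charish N \<xi> \<longleftrightarrow> (\<forall>a b. [a = b] (mod int N) \<longrightarrow> \<xi> a = \<xi> b) \<and>
     (\<forall>a b. coprime a (int N) \<longrightarrow> coprime b (int N) \<longrightarrow> \<xi> (a * b) = \<xi> a * \<xi> b) \<and> \<xi> 1 = 1"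

lemma cond_dvd:
  fixes \<xi> :: "int \<Rightarrow> 'o::comm_ring_1"
  assumes ch: "charish N \<xi>" and N: "0 < N" and d: "d dvd N" "0 < d"
    and triv: "\<forall>a. coprime a (int N) \<and> [a = 1] (mod int d) \<longrightarrow> \<xi> a = 1"
  shows "conductor N \<xi> dvd d"
proof -
  define P where "P f \<longleftrightarrow> 0 < f \<and> f dvd N \<and>
      (\<forall>a. coprime a (int N) \<and> [a = 1] (mod int f) \<longrightarrow> \<xi> a = 1)" for f
  have cdef: "conductor N \<xi> = (LEAST f. P f)" unfolding conductor_def P_def by simp
  have Pd: "P d" using d triv unfolding P_def by auto
  define f where "f = conductor N \<xi>"
  have Pf: "P f" unfolding f_def cdef by (rule LeastI[of P d, OF Pd])
  define e where "e = gcd f d"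
  have Pe: "P e"
  proof -
    have e0: "0 < e" "e dvd N" using Pf d unfolding P_def e_def by auto
    have "\<xi> a = 1" if a: "coprime a (int N)" "[a = 1] (mod int e)" for a
    proof -
      obtain k where k: "a = 1 + int e * k"
        using a(2) by (metis cong_iff_lin cong_sym mult.commute add.commute)
      obtain s t where st: "s * int f + t * int d = int e"
        using bezout_int[of "int f" "int d"] unfolding e_def by (auto simp: gcd_int_int_eq)
      define x0 where "x0 = 1 + k * s * int f"
      have x0f: "[x0 = 1] (mod int f)" unfolding x0_def
        by (simp add: cong_iff_dvd_diff)
      have x0d: "[x0 = a] (mod int d)" unfolding x0_def k st[symmetric]
        by (simp add: cong_iff_dvd_diff algebra_simps)
      have cf: "coprime x0 (int f)" using x0f
        by (metis cong_imp_coprime cong_sym coprime_1_left)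
      have ad: "coprime a (int d)" using a(1) d(1)
        by (meson coprime_divisors dvd_refl int_dvd_int_iff)
      have cd: "coprime x0 (int d)" using x0d ad
        by (metis cong_imp_coprime cong_sym)
      have "coprime x0 (int f * int d)" using cf cd by simp
      moreover have "lcm (int f) (int d) dvd int f * int d" by (rule lcm_least) simp_all
      ultimately have cl: "coprime x0 (lcm (int f) (int d))"
        using coprime_divisors dvd_refl by blast
      have ldvd: "lcm (int f) (int d) dvd int N" using Pf d unfolding P_def by simp
      obtain tt where tt: "coprime (x0 + lcm (int f) (int d) * tt) (int N)"
        using lift[OF cl ldvd] N by auto
      define x where "x = x0 + lcm (int f) (int d) * tt"
      have xf: "[x = 1] (mod int f)"
      proof -
        have "int f dvd x0 - 1" using x0f by (simp add: cong_iff_dvd_diff)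
        moreover have "int f dvd lcm (int f) (int d) * tt" by simp
        ultimately have "int f dvd (x0 - 1) + lcm (int f) (int d) * tt" by (rule dvd_add)
        thus ?thesis unfolding x_def by (simp add: cong_iff_dvd_diff algebra_simps)
      qed
      have xd: "[x = a] (mod int d)"
      proof -
        have "int d dvd x0 - a" using x0d by (simp add: cong_iff_dvd_diff)
        moreover have "int d dvd lcm (int f) (int d) * tt" by simp
        ultimately have "int d dvd (x0 - a) + lcm (int f) (int d) * tt" by (rule dvd_add)
        thus ?thesis unfolding x_def by (simp add: cong_iff_dvd_diff algebra_simps)
      qed
      have xN: "coprime x (int N)" using tt unfolding x_def .
      obtain y where y: "[x * y = 1] (mod int N)" using cong_solve_coprime_int[OF xN] by auto
      have yN: "coprime y (int N)" using y
        by (metis cong_imp_coprime cong_sym coprime_1_left coprime_mult_left_iff)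
      define z where "z = a * y"
      have zN: "coprime z (int N)" unfolding z_def using yN a(1) by simp
      have "[x * y = 1] (mod int d)" using y d(1) cong_dvd_modulus int_dvd_int_iff by blast
      moreover have "[x * y = a * y] (mod int d)" using xd by (simp add: cong_mult)
      ultimately have zd: "[z = 1] (mod int d)" unfolding z_def by (metis cong_sym cong_trans)
      have xi_x: "\<xi> x = 1" using Pf xN xf unfolding P_def by auto
      have xi_z: "\<xi> z = 1" using triv zN zd by auto
      have "[x * z = a] (mod int N)" unfolding z_def using y
        by (metis cong_scalar_right mult.assoc mult.commute mult.left_neutral)
      hence "\<xi> a = \<xi> (x * z)" using ch unfolding charish_def by (metis cong_sym)
      also have "\<dots> = 1" using ch xN zN xi_x xi_z unfolding charish_def by simp
      finally show ?thesis .
    qed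
    thus ?thesis using e0 unfolding P_def by auto
  qed
  have "f \<le> e" unfolding f_def cdef by (rule Least_le[of P, OF Pe])
  moreover have "e \<le> f" using Pf unfolding e_def P_def by (simp add: gcd_le1_nat)
  ultimately have "e = f" by simp
  thus ?thesis unfolding e_def f_def by (metis gcd_dvd2)
qed

lemma res_inv_cong: "[x = x'] (mod int N) \<Longrightarrow> res_inv N x = res_inv N x'"
proof -
  assume h: "[x = x'] (mod int N)"
  have "(\<lambda>b. [x * b = 1] (mod int N)) = (\<lambda>b. [x' * b = 1] (mod int N))"
  proof
    fix b
    have "[x * b = x' * b] (mod int N)" using h by (simp add: cong_mult)
    thus "[x * b = 1] (mod int N) = [x' * b = 1] (mod int N)"
      by (meson cong_sym cong_trans)
  qed
  thus ?thesis unfolding res_inv_def by simp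
qed

lemma res_inv_spec: "coprime x (int N) \<Longrightarrow> [x * res_inv N x = 1] (mod int N)"
  unfolding res_inv_def by (rule someI_ex) (rule cong_solve_coprime_int)

lemma res_inv_coprime: "coprime x (int N) \<Longrightarrow> coprime (res_inv N x) (int N)"
  by (metis res_inv_spec cong_imp_coprime cong_sym coprime_1_left coprime_mult_left_iff)

lemma inv_unique: fixes x r r' :: int
  assumes "[x * r = 1] (mod n)" "[x * r' = 1] (mod n)" shows "[r = r'] (mod n)"
proof -
  have "[r * (x * r') = r * 1] (mod n)" using assms(2) by (rule cong_scalar_left)
  moreover have "[(x * r) * r' = 1 * r'] (mod n)" using assms(1) by (rule cong_scalar_right)
  ultimately show ?thesis by (metis cong_sym cong_trans mult.assoc mult.commute mult_1)
qed

lemma shift_zero: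
  fixes scale :: "'o::comm_ring_1 \<Rightarrow> 'h::ab_group_add \<Rightarrow> 'h" and \<xi> :: "int \<Rightarrow> 'o"
    and \<Phi> :: "int \<Rightarrow> 'h"
  assumes md: "Modules.module scale" and N: "0 < N" and ch: "charish N \<xi>"
    and w: "coprime w (int N)" "[w = 1] (mod int (N div g))" and g: "g dvd N"
    and un: "(1 - \<xi> w) dvd 1"
    and per: "\<forall>x x'. [x = x'] (mod int N) \<longrightarrow> \<Phi> x = \<Phi> x'"
  shows "(\<Sum>a\<in>units_mod N. scale (char_inv N \<xi> a) (\<Phi> (int g * a))) = 0"
proof -
  interpret Modules.module scale by (rule md)
  define U where "U = units_mod N"
  define F where "F a = scale (char_inv N \<xi> a) (\<Phi> (int g * a))" for a
  define T where "T = (\<Sum>a\<in>U. F a)"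
  obtain y where y: "[w * y = 1] (mod int N)" using cong_solve_coprime_int[OF w(1)] by auto
  define u where "u = y mod int N"
  have wu: "[w * u = 1] (mod int N)" unfolding u_def using y
    by (metis cong_def mod_mult_right_eq)
  have uN: "coprime u (int N)" using wu
    by (metis cong_imp_coprime cong_sym coprime_1_left coprime_mult_left_iff)
  have wN: "[w = 1] (mod int N) \<Longrightarrow> True" by simp
  have gNg: "int N = int g * int (N div g)" using g by (metis dvd_mult_div_cancel of_nat_mult)
  have u1: "[u = 1] (mod int (N div g))"
  proof -
    have "[w * u = 1] (mod int (N div g))" using wu gNg cong_dvd_modulus by (metis dvd_triv_right)
    moreover have "[w * u = 1 * u] (mod int (N div g))" using w(2) by (rule cong_scalar_right)
    ultimately show ?thesis by (metis cong_sym cong_trans mult_1)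
  qed
  define \<phi> where "\<phi> a = a * u mod int N" for a
  define \<sigma> where "\<sigma> a = a * w mod int N" for a
  have inU: "x mod int N \<in> U" if "coprime x (int N)" for x
  proof -
    have "coprime (x mod int N) (int N)" using that
      by (metis cong_imp_coprime cong_mod_left cong_refl cong_sym)
    thus ?thesis unfolding U_def units_mod_def using N by auto
  qed
  have Ueq: "a mod int N = a" if "a \<in> U" for a using that unfolding U_def units_mod_def by auto
  have Ucop: "coprime a (int N)" if "a \<in> U" for a using that unfolding U_def units_mod_def by auto
  have reidx: "(\<Sum>a\<in>U. F (\<phi> a)) = (\<Sum>a\<in>U. F a)"
  proof (rule sum.reindex_bij_witness[of _ \<sigma> \<phi>])
    fix a assume a: "a \<in> U"
    have "\<sigma> (\<phi> a) = (a * (w * u)) mod int N" unfolding \<sigma>_def \<phi>_def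
      by (metis mod_mult_left_eq mult.assoc mult.commute)
    also have "\<dots> = (a * 1) mod int N" using wu by (metis cong_def mod_mult_right_eq)
    finally show "\<sigma> (\<phi> a) = a" using Ueq[OF a] by simp
    show "\<phi> a \<in> U" unfolding \<phi>_def using Ucop[OF a] uN by (intro inU) simp
  next
    fix a assume a: "a \<in> U"
    have "\<phi> (\<sigma> a) = (a * (w * u)) mod int N" unfolding \<sigma>_def \<phi>_def
      by (metis mod_mult_left_eq mult.assoc)
    also have "\<dots> = (a * 1) mod int N" using wu by (metis cong_def mod_mult_right_eq)
    finally show "\<phi> (\<sigma> a) = a" using Ueq[OF a] by simp
    show "\<sigma> a \<in> U" unfolding \<sigma>_def using Ucop[OF a] w(1) by (intro inU) simp
  qed simp
  have Fphi: "F (\<phi> a) = scale (\<xi> w) (F a)" if a: "a \<in> U" for a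
  proof -
    have aN: "coprime a (int N)" using Ucop[OF a] .
    define ra where "ra = res_inv N a"
    have ra: "[a * ra = 1] (mod int N)" "coprime ra (int N)"
      unfolding ra_def using aN by (simp_all add: res_inv_spec res_inv_coprime)
    have phi_c: "[\<phi> a = a * u] (mod int N)" unfolding \<phi>_def by (simp add: cong_def)
    have "coprime (a * u) (int N)" using aN uN by simp
    hence phiN: "coprime (\<phi> a) (int N)" using phi_c cong_imp_coprime cong_sym by blast
    have c1: "[\<phi> a * (ra * w) = 1] (mod int N)"
    proof -
      have "[\<phi> a * (ra * w) = (a * u) * (ra * w)] (mod int N)" using phi_c by (rule cong_scalar_right)
      moreover have "(a * u) * (ra * w) = (a * ra) * (w * u)" by (simp add: algebra_simps)
      ultimately have "[\<phi> a * (ra * w) = (a * ra) * (w * u)] (mod int N)" by simp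
      moreover have "[(a * ra) * (w * u) = 1 * 1] (mod int N)" using ra(1) wu by (rule cong_mult)
      ultimately show ?thesis using cong_trans by fastforce
    qed
    have "[res_inv N (\<phi> a) = ra * w] (mod int N)"
      using inv_unique[OF res_inv_spec[OF phiN] c1] .
    hence "char_inv N \<xi> (\<phi> a) = \<xi> (ra * w)" unfolding char_inv_def using ch
      unfolding charish_def by blast
    also have "\<dots> = \<xi> ra * \<xi> w" using ch ra(2) w(1) unfolding charish_def by blast
    finally have ci: "char_inv N \<xi> (\<phi> a) = \<xi> w * char_inv N \<xi> a"
      unfolding char_inv_def ra_def by (simp add: mult.commute)
    have "[int g * \<phi> a = int g * a] (mod int N)"
    proof -
      have "[int g * \<phi> a = int g * (a * u)] (mod int N)" using phi_c by (rule cong_scalar_left)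
      moreover have "int N dvd int g * (a * u) - int g * a"
      proof -
        obtain k where "u - 1 = int (N div g) * k" using u1
          by (metis cong_iff_dvd_diff dvd_def)
        hence "int g * (a * u) - int g * a = int N * (a * k)" unfolding gNg
          by (simp add: algebra_simps)
        thus ?thesis by simp
      qed
      ultimately show ?thesis by (metis cong_iff_dvd_diff cong_trans)
    qed
    hence "\<Phi> (int g * \<phi> a) = \<Phi> (int g * a)" using per by blast
    thus ?thesis unfolding F_def ci by simp
  qed
  have "T = (\<Sum>a\<in>U. F (\<phi> a))" unfolding T_def using reidx by simp
  also have "\<dots> = (\<Sum>a\<in>U. scale (\<xi> w) (F a))" using Fphi by simp
  also have "\<dots> = scale (\<xi> w) T" unfolding T_def by (simp add: scale_sum_right)
  finally have T1: "T = scale (\<xi> w) T" .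
  have T0: "scale (1 - \<xi> w) T = 0" using T1 by (simp add: scale_left_diff_distrib)
  obtain v where v: "1 = (1 - \<xi> w) * v" using un by (auto elim: dvdE)
  have "T = scale (v * (1 - \<xi> w)) T" using v by (simp add: mult.commute)
  also have "\<dots> = 0" using T0 by (simp flip: scale_scale)
  finally show ?thesis unfolding T_def F_def U_def .
qed

lemma one_minus_unit:
  fixes c :: "'o::idom" and p n :: nat
  assumes np: "\<not> (of_nat p :: 'o) dvd 1" and loc: "\<forall>x::'o. x dvd 1 \<or> of_nat p dvd x"
    and cn: "c ^ n = 1" and c1: "c \<noteq> 1" and cop: "coprime p n"
  shows "(1 - c) dvd 1"
proof (rule ccontr)
  assume "\<not> (1 - c) dvd 1"
  hence pd: "of_nat p dvd (1 - c)" using loc by blast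
  define S where "S = (\<Sum>k<n. c ^ k)"
  have "(1 - c) * S = 0" unfolding S_def using one_diff_power_eq[of c n] cn by simp
  hence S0: "S = 0" using c1 by simp
  have "of_nat p dvd (\<Sum>k<n. 1 - c ^ k)"
  proof (rule dvd_sum)
    fix k show "of_nat p dvd 1 - c ^ k"
      using pd one_diff_power_eq[of c k] by (metis dvd_mult2)
  qed
  also have "(\<Sum>k<n. 1 - c ^ k) = of_nat n - S" unfolding S_def by (simp add: sum_subtractf)
  finally have pn: "of_nat p dvd (of_nat n :: 'o)" using S0 by simp
  obtain u v where uv: "u * int p + v * int n = gcd (int p) (int n)" using bezout_int by blast
  hence "u * int p + v * int n = 1" using cop by (simp add: gcd_int_int_eq)
  hence "of_int (u * int p + v * int n) = (1 :: 'o)" by simp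
  hence "of_int u * of_nat p + of_int v * of_nat n = (1 :: 'o)" by simp
  moreover have "of_nat p dvd (of_int u * of_nat p + of_int v * (of_nat n :: 'o))"
    using pn by (simp add: dvd_add)
  ultimately show False using np by simp
qed

lemma charish_pow:
  assumes ch: "charish N \<xi>" and w: "coprime w (int N)"
  shows "\<xi> (w ^ k) = \<xi> w ^ k"
proof (induction k)
  case 0 then show ?case using ch unfolding charish_def by simp
next
  case (Suc k)
  have "coprime (w ^ k) (int N)" using w by simp
  then have "\<xi> (w * w ^ k) = \<xi> w * \<xi> (w ^ k)" using ch w unfolding charish_def by blast
  then show ?case using Suc by simp
qed

lemma charish_root:
  assumes ch: "charish N \<xi>" and w: "coprime w (int N)" and N: "1 < N"
  shows "\<xi> w ^ totient N = 1"
proof -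
  have "residues (int N)" using N unfolding residues_def by simp
  hence "[w ^ totient (nat (int N)) = 1] (mod int N)" using w by (rule residues.euler_theorem)
  hence "[w ^ totient N = 1] (mod int N)" by simp
  hence "\<xi> (w ^ totient N) = \<xi> 1" using ch unfolding charish_def by blast
  thus ?thesis using ch charish_pow[OF ch w] unfolding charish_def by simp
qed

lemma is_char_charish:
  fixes \<chi> :: "int \<Rightarrow> 'o::idom"
  assumes "is_char N \<chi>" shows "charish N \<chi>"
proof -
  have c: "coprime (1::int) (int N)" by simp
  have m: "\<chi> (1 * 1) = \<chi> 1 * \<chi> 1" using assms c unfolding is_char_def by blast
  have "\<chi> 1 dvd 1" using assms c unfolding is_char_def by blast
  hence "\<chi> 1 \<noteq> 0" by auto
  hence "\<chi> 1 = 1" using m by simp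
  thus ?thesis using assms unfolding is_char_def charish_def by blast
qed

lemma psi_charish:
  fixes \<chi> \<theta> :: "int \<Rightarrow> 'o::idom"
  assumes ch: "charish N \<chi>" and th: "charish N \<theta>"
  shows "charish N (\<lambda>b. \<theta> b * char_inv N \<chi> b)"
proof -
  have per: "char_inv N \<chi> a = char_inv N \<chi> b" if "[a = b] (mod int N)" for a b
    unfolding char_inv_def using res_inv_cong[OF that] by simp
  have mul: "char_inv N \<chi> (a * b) = char_inv N \<chi> a * char_inv N \<chi> b"
    if a: "coprime a (int N)" and b: "coprime b (int N)" for a b
  proof -
    have ab: "coprime (a * b) (int N)" using a b by simp
    have "[(a * b) * (res_inv N a * res_inv N b) = (a * res_inv N a) * (b * res_inv N b)] (mod int N)"
      by (simp add: algebra_simps)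
    moreover have "[(a * res_inv N a) * (b * res_inv N b) = 1 * 1] (mod int N)"
      using res_inv_spec[OF a] res_inv_spec[OF b] by (rule cong_mult)
    ultimately have "[(a * b) * (res_inv N a * res_inv N b) = 1] (mod int N)"
      using cong_trans by fastforce
    hence "[res_inv N (a * b) = res_inv N a * res_inv N b] (mod int N)"
      using inv_unique[OF res_inv_spec[OF ab]] by blast
    hence "char_inv N \<chi> (a * b) = \<chi> (res_inv N a * res_inv N b)"
      unfolding char_inv_def using ch unfolding charish_def by blast
    also have "\<dots> = char_inv N \<chi> a * char_inv N \<chi> b" unfolding char_inv_def
      using ch res_inv_coprime[OF a] res_inv_coprime[OF b] unfolding charish_def by blast
    finally show ?thesis .
  qed
  have one: "char_inv N \<chi> 1 = 1"
  proof -
    have "[res_inv N 1 = 1] (mod int N)"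
      using inv_unique[OF res_inv_spec[of 1 N]] by simp
    hence "char_inv N \<chi> 1 = \<chi> 1" unfolding char_inv_def using ch unfolding charish_def by blast
    thus ?thesis using ch unfolding charish_def by simp
  qed
  show ?thesis unfolding charish_def
  proof (intro conjI allI impI)
    fix a b :: int assume "[a = b] (mod int N)"
    thus "\<theta> a * char_inv N \<chi> a = \<theta> b * char_inv N \<chi> b"
      using per th unfolding charish_def by metis
  next
    fix a b :: int assume "coprime a (int N)" "coprime b (int N)"
    thus "\<theta> (a * b) * char_inv N \<chi> (a * b) = \<theta> a * char_inv N \<chi> a * (\<theta> b * char_inv N \<chi> b)"
      using mul th unfolding charish_def by (simp add: algebra_simps)
  next
    show "\<theta> 1 * char_inv N \<chi> 1 = 1" using one th unfolding charish_def by simp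
  qed
qed

lemma totient_cop:
  fixes p M N :: nat
  assumes p: "prime p" and M: "\<not> p dvd M * totient M" and N: "N = M \<or> N = M * p"
  shows "coprime p (totient N)"
proof -
  have pM: "\<not> p dvd M" "\<not> p dvd totient M" using M by auto
  have "\<not> p dvd totient N"
  proof (cases "N = M")
    case True thus ?thesis using pM by simp
  next
    case False
    hence NN: "N = M * p" using N by simp
    have "coprime M p" using pM(1) p by (metis prime_imp_coprime coprime_commute)
    hence "totient N = totient M * (p - 1)" unfolding NN
      by (simp add: totient_mult_coprime totient_prime p)
    moreover have "\<not> p dvd p - 1" using p
      by (metis One_nat_def diff_less dvd_imp_le less_one not_le prime_gt_0_nat zero_less_diff prime_gt_1_nat)
    ultimately show ?thesis using pM(2) p by (simp add: prime_dvd_mult_iff)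
  qed
  thus ?thesis using p by (simp add: prime_imp_coprime)
qed
theorem lemma2p9:
  fixes p M N g h :: nat
    and scale :: "'o::idom \<Rightarrow> 'h::ab_group_add \<Rightarrow> 'h"
    and msym :: "int \<Rightarrow> int \<Rightarrow> 'h"
    and dia :: "int \<Rightarrow> 'h \<Rightarrow> 'h"
    and \<theta> \<chi> :: "int \<Rightarrow> 'o"
  assumes p: "prime p" "odd p"
    and M: "0 < M" "\<not> p dvd M * totient M"
    and N: "N = M \<or> N = M * p" "1 < N"
    \<comment> \<open>O = Z_p[mu_phi(N)]: a local domain with maximal ideal pO containing phi(N) distinct
        phi(N)-th roots of unity\<close>
    and O_local: "\<not> (of_nat p :: 'o) dvd 1" "\<forall>x::'o. x dvd 1 \<or> of_nat p dvd x"
    and O_mu: "card {z::'o. z ^ totient N = 1} = totient N"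
    \<comment> \<open>H tensor O: an O-module spanned by symbols [u:v] satisfying the relations\<close>
    and H_mod: "Modules.module scale"
    and sym_periodic: "\<forall>u v u' v'. [u = u'] (mod int N) \<longrightarrow> [v = v'] (mod int N) \<longrightarrow> msym u v = msym u' v'"
    and sym_rel1: "\<forall>u v. unimod N u v \<longrightarrow> msym u v = msym (-u) (-v)"
    and sym_rel2: "\<forall>u v. unimod N u v \<longrightarrow> msym u v = - msym (-v) u"
    and sym_rel3: "\<forall>u v. unimod N u v \<longrightarrow> msym u v = msym u (u + v) + msym (u + v) v"
    and H_span: "Modules.module.span scale {msym u v | u v. unimod N u v} = UNIV"
    and dia_lin: "\<forall>a. coprime a (int N) \<longrightarrow>
        (\<forall>x y. dia a (x + y) = dia a x + dia a y) \<and> (\<forall>c x. dia a (scale c x) = scale c (dia a x))"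
    and dia_sym: "\<forall>a u v. coprime a (int N) \<longrightarrow> unimod N u v \<longrightarrow> dia a (msym u v) = msym (a * u) (a * v)"
    \<comment> \<open>theta: a character of Delta = (Z/NZ)^x/<-1>\<close>
    and theta: "is_char N \<theta>" "\<theta> (-1) = 1"
    and chi: "is_char N \<chi>"
    and gh: "g dvd N" "h dvd N" "coprime g h"
  shows "eigensym scale msym N g h \<chi> (\<lambda>b. \<theta> b * char_inv N \<chi> b) \<noteq> 0 \<longrightarrow>
           conductor N \<chi> dvd N div g \<and> conductor N (\<lambda>b. \<theta> b * char_inv N \<chi> b) dvd N div h"
proof
  assume ne: "eigensym scale msym N g h \<chi> (\<lambda>b. \<theta> b * char_inv N \<chi> b) \<noteq> 0"
  define \<psi> where "\<psi> = (\<lambda>b. \<theta> b * char_inv N \<chi> b)"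
  interpret Modules.module scale by (rule H_mod)
  have N0: "0 < N" using N by simp
  have g0: "0 < g" "0 < h" using gh N0 by (auto intro!: Nat.gr0I)
  have chc: "charish N \<chi>" using chi by (rule is_char_charish)
  have thc: "charish N \<theta>" using theta(1) by (rule is_char_charish)
  have psc: "charish N \<psi>" unfolding \<psi>_def using chc thc by (rule psi_charish)
  have cop: "coprime p (totient N)" using totient_cop[OF p(1) M(2) N(1)] .
  have unit: "(1 - \<xi> w) dvd 1" if "charish N \<xi>" "coprime w (int N)" "\<xi> w \<noteq> 1"
    for \<xi> :: "int \<Rightarrow> 'o" and w
    using one_minus_unit[OF O_local(1) O_local(2) charish_root[OF that(1,2) N(2)] that(3) cop] .
  define S where "S = (\<Sum>a\<in>units_mod N. \<Sum>b\<in>units_mod N.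
          scale (char_inv N \<chi> a * char_inv N \<psi> b) (msym (int g * a) (int h * b)))"
  have "S \<noteq> 0" using ne unfolding eigensym_def S_def \<psi>_def by auto
  define \<Phi>1 where "\<Phi>1 x = (\<Sum>b\<in>units_mod N. scale (char_inv N \<psi> b) (msym x (int h * b)))" for x
  define \<Phi>2 where "\<Phi>2 y = (\<Sum>a\<in>units_mod N. scale (char_inv N \<chi> a) (msym (int g * a) y))" for y
  have S1: "S = (\<Sum>a\<in>units_mod N. scale (char_inv N \<chi> a) (\<Phi>1 (int g * a)))"
    unfolding S_def \<Phi>1_def by (simp add: scale_sum_right)
  have S2: "S = (\<Sum>b\<in>units_mod N. scale (char_inv N \<psi> b) (\<Phi>2 (int h * b)))"
    unfolding S_def \<Phi>2_def by (subst sum.swap) (simp add: scale_sum_right mult.commute)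
  have per1: "\<forall>x x'. [x = x'] (mod int N) \<longrightarrow> \<Phi>1 x = \<Phi>1 x'"
  proof (intro allI impI)
    fix x x' :: int assume c: "[x = x'] (mod int N)"
    have "msym x (int h * b) = msym x' (int h * b)" for b using sym_periodic c cong_refl by blast
    thus "\<Phi>1 x = \<Phi>1 x'" unfolding \<Phi>1_def by simp
  qed
  have per2: "\<forall>x x'. [x = x'] (mod int N) \<longrightarrow> \<Phi>2 x = \<Phi>2 x'"
  proof (intro allI impI)
    fix x x' :: int assume c: "[x = x'] (mod int N)"
    have "msym (int g * a) x = msym (int g * a) x'" for a using sym_periodic c cong_refl by blast
    thus "\<Phi>2 x = \<Phi>2 x'" unfolding \<Phi>2_def by simp
  qed
  have dg: "N div g dvd N" "0 < N div g" "N div h dvd N" "0 < N div h"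
  proof -
    have e1: "N = g * (N div g)" "N = h * (N div h)" using gh by simp_all
    show "N div g dvd N" "N div h dvd N" using e1 by (metis dvd_triv_right)+
    show "0 < N div g" "0 < N div h" using e1 N0 by (metis mult_0_right neq0_conv less_irrefl)+
  qed
  have A: "conductor N \<chi> dvd N div g"
  proof (rule cond_dvd[OF chc N0 dg(1,2)], intro allI impI)
    fix w assume w: "coprime w (int N) \<and> [w = 1] (mod int (N div g))"
    show "\<chi> w = 1"
    proof (rule ccontr)
      assume "\<chi> w \<noteq> 1"
      hence "S = 0" unfolding S1 using w unit[OF chc _ \<open>\<chi> w \<noteq> 1\<close>]
        by (intro shift_zero[OF H_mod N0 chc _ _ gh(1) _ per1]) auto
      thus False using \<open>S \<noteq> 0\<close> by simp
    qed
  qed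
  have B: "conductor N \<psi> dvd N div h"
  proof (rule cond_dvd[OF psc N0 dg(3,4)], intro allI impI)
    fix w assume w: "coprime w (int N) \<and> [w = 1] (mod int (N div h))"
    show "\<psi> w = 1"
    proof (rule ccontr)
      assume "\<psi> w \<noteq> 1"
      hence "S = 0" unfolding S2 using w unit[OF psc _ \<open>\<psi> w \<noteq> 1\<close>]
        by (intro shift_zero[OF H_mod N0 psc _ _ gh(2) _ per2]) auto
      thus False using \<open>S \<noteq> 0\<close> by simp
    qed
  qed
  show "conductor N \<chi> dvd N div g \<and> conductor N (\<lambda>b. \<theta> b * char_inv N \<chi> b) dvd N div h"
    using A B unfolding \<psi>_def by simp
qed

end
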